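(* Let $n\in\mathbb{N}$ and let $f_0,f_1,\dots,f_{n-1}$ be complex-valued functions on the unit disc $\mathbb{D}$. For $z\in\mathbb{D}$ and $j=0,\dots,n-1$ define $$D_j(z)=\sum_{k=0}^{n-1}|z|^{jk}f_k(z)\frac{(1-|z|^2)^n}{(1-|z|^{j+2})^k}.$$ Then there exist functions $b_{jk}$ on $\{0<|z|<1\}$, bounded on $\{\frac12<|z|<1\}$, such that for each $0\le k\le n-1$, $$f_k(z)(1-|z|)^{n-k}=\sum_{j=0}^{n-1}b_{jk}(z)D_j(z),\qquad 0<|z|<1.$$ *)

theory Defs
  imports Complex_Main
begin

definition Dfun :: "nat \<Rightarrow> (nat \<Rightarrow> complex \<Rightarrow> complex) \<Rightarrow> nat \<Rightarrow> complex \<Rightarrow> complex" where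
  "Dfun n f j z = (\<Sum>k<n. of_real (norm z ^ (j * k)) * f k z *
      of_real ((1 - (norm z)\<^sup>2) ^ n / (1 - norm z ^ (j + 2)) ^ k))"

end

theory Submission imports Defs "HOL-Computational_Algebra.Polynomial" begin
definition Lp :: "nat \<Rightarrow> (nat \<Rightarrow> 'a::field) \<Rightarrow> nat \<Rightarrow> 'a poly" where
  "Lp n y j = (\<Prod>i\<in>{..<n}-{j}. [:- y i, 1:])"
definition Ld :: "nat \<Rightarrow> (nat \<Rightarrow> 'a::field) \<Rightarrow> nat \<Rightarrow> 'a" where
  "Ld n y j = (\<Prod>i\<in>{..<n}-{j}. (y j - y i))"

lemma lagrange:
  fixes y :: "nat \<Rightarrow> 'a::field"
  assumes inj: "inj_on y {..<n}" and k: "k < n"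
  shows "g k = (\<Sum>j<n. (coeff (Lp n y j) k / Ld n y j) * (\<Sum>m<n. y j ^ m * g m))"
proof -
  define P where "P = (\<Sum>m<n. monom (g m) m)"
  define Q where "Q = (\<Sum>j<n. smult (poly P (y j) / Ld n y j) (Lp n y j))"
  have polyP: "poly P x = (\<Sum>m<n. x ^ m * g m)" for x
    by (simp add: P_def poly_sum poly_monom mult.commute)
  have Ld0: "Ld n y j \<noteq> 0" if "j < n" for j
    unfolding Ld_def using inj that by (auto simp: inj_on_def)
  have LpY: "poly (Lp n y j) (y m) = (if j = m then Ld n y j else 0)" if "j<n" "m<n" for j m
  proof (cases "j = m")
    case True thus ?thesis by (simp add: Lp_def Ld_def poly_prod)
  next
    case False
    have "(\<Prod>i\<in>{..<n}-{j}. poly [:- y i, 1:] (y m)) = 0"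
      using that False by (intro prod_zero) auto
    thus ?thesis using False by (simp add: Lp_def poly_prod)
  qed
  have polyQ: "poly Q (y m) = poly P (y m)" if "m < n" for m
  proof -
    have "poly Q (y m) = (\<Sum>j<n. poly P (y j) / Ld n y j * poly (Lp n y j) (y m))"
      by (simp add: Q_def poly_sum)
    also have "\<dots> = (\<Sum>j<n. if j = m then poly P (y m) else 0)"
      using that LpY Ld0 by (intro sum.cong) auto
    also have "\<dots> = poly P (y m)" using that by simp
    finally show ?thesis .
  qed
  have cardA: "card (y ` {..<n}) = n" using inj by (simp add: card_image)
  have dP: "degree P < n"
    unfolding P_def using k
    by (intro le_less_trans[OF degree_sum_le[where n="n-1"]]) (auto intro: order.trans[OF degree_monom_le])
  have dL: "degree (Lp n y j) \<le> n - 1" if "j < n" for j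
  proof -
    have "degree (Lp n y j) \<le> sum (degree \<circ> (\<lambda>i. [:- y i, 1:])) ({..<n}-{j})"
      unfolding Lp_def by (rule degree_prod_sum_le) auto
    also have "\<dots> = card ({..<n}-{j})" by simp
    also have "\<dots> = n - 1" using that by simp
    finally show ?thesis .
  qed
  have dQ: "degree Q < n"
    unfolding Q_def using k
    by (intro le_less_trans[OF degree_sum_le[where n="n-1"]]) (use dL in \<open>auto intro: order.trans[OF degree_smult_le]\<close>)
  have "P = Q"
    by (rule poly_eqI_degree[where A="y ` {..<n}"]) (use polyQ cardA dP dQ in auto)
  hence "coeff P k = coeff Q k" by simp
  moreover have "coeff P k = g k" using k by (simp add: P_def coeff_sum coeff_monom)
  moreover have "coeff Q k = (\<Sum>j<n. (coeff (Lp n y j) k / Ld n y j) * (\<Sum>m<n. y j ^ m * g m))"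
    by (simp add: Q_def coeff_sum polyP mult.commute)
  ultimately show ?thesis by simp
qed
lemma coeff_lin_prod_bound:
  fixes y :: "nat \<Rightarrow> complex"
  assumes "finite S" "\<And>i. i \<in> S \<Longrightarrow> norm (y i) \<le> 1"
  shows "norm (coeff (\<Prod>i\<in>S. [:- y i, 1:]) k) \<le> 2 ^ card S"
  using assms
proof (induction S arbitrary: k rule: finite_induct)
  case empty thus ?case by (cases k) auto
next
  case (insert a S)
  let ?q = "\<Prod>i\<in>S. [:- y i, 1:]"
  have e: "(\<Prod>i\<in>insert a S. [:- y i, 1:]) = smult (- y a) ?q + pCons 0 ?q"
    using insert by (simp add: mult_pCons_left)
  have b1: "norm (coeff ?q m) \<le> 2 ^ card S" for m using insert by auto
  have b2: "norm (coeff (pCons 0 ?q) k) \<le> 2 ^ card S"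
    using b1 by (cases k) auto
  have "norm (- y a * coeff ?q k) \<le> 1 * 2 ^ card S"
    unfolding norm_mult norm_minus_cancel
    by (intro mult_mono) (use insert b1 in auto)
  moreover have ce: "coeff (smult (- y a) ?q + pCons 0 ?q) k = - y a * coeff ?q k + coeff (pCons 0 ?q) k"
    by (simp only: coeff_add coeff_smult)
  moreover have "norm (- y a * coeff ?q k + coeff (pCons 0 ?q) k) \<le> norm (- y a * coeff ?q k) + norm (coeff (pCons 0 ?q) k)"
    by (rule norm_triangle_ineq)
  ultimately have "norm (coeff (smult (- y a) ?q + pCons 0 ?q) k) \<le> 2 ^ card S + 2 ^ card S"
    using b2 unfolding ce by linarith
  thus ?case using e insert by simp
qed

definition TT :: "real \<Rightarrow> nat \<Rightarrow> real" where "TT r m = (\<Sum>i<m. r ^ i)"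
definition yy :: "real \<Rightarrow> nat \<Rightarrow> real" where "yy r j = r ^ j / TT r (j + 2)"

lemma TT_ge1: "r \<ge> 0 \<Longrightarrow> m \<ge> 1 \<Longrightarrow> TT r m \<ge> 1"
proof -
  assume "r \<ge> 0" "m \<ge> 1"
  then obtain m' where m: "m = Suc m'" by (cases m) auto
  have "TT r m = 1 + r * TT r m'" unfolding TT_def m sum.lessThan_Suc_shift
    by (simp add: sum_distrib_left)
  moreover have "TT r m' \<ge> 0" unfolding TT_def using \<open>r \<ge> 0\<close> by (intro sum_nonneg) auto
  ultimately show ?thesis using \<open>r \<ge> 0\<close> by simp
qed

lemma TT_le: "r \<le> 1 \<Longrightarrow> r \<ge> 0 \<Longrightarrow> TT r m \<le> m"
proof -
  assume "r \<le> 1" "r \<ge> 0"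
  have "TT r m \<le> (\<Sum>i<m. 1)" unfolding TT_def
    by (intro sum_mono) (simp add: \<open>r \<le> 1\<close> \<open>r \<ge> 0\<close> power_le_one)
  thus ?thesis by simp
qed

lemma TT_Suc: "TT r (Suc k) = 1 + r * TT r k"
  unfolding TT_def sum.lessThan_Suc_shift by (simp add: sum_distrib_left)

lemma yy_gap: assumes "r > 0" shows "yy r m - yy r (Suc m) = r ^ m / (TT r (m+2) * TT r (m+3))"
proof -
  define A where "A = TT r (m+2)"
  define B where "B = TT r (m+3)"
  have m3: "m + 3 = Suc (m + 2)" by simp
  have T3: "B = 1 + r * A" unfolding A_def B_def m3 by (rule TT_Suc)
  have "A \<ge> 1" "B \<ge> 1" unfolding A_def B_def using TT_ge1[of r] assms by simp_all
  hence p2: "A \<noteq> 0" "B \<noteq> 0" by auto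
  have "yy r m - yy r (Suc m) = r ^ m / A - r * r ^ m / B"
    unfolding yy_def A_def B_def by (simp add: numeral_3_eq_3)
  also have "\<dots> = (r ^ m * B - r * r ^ m * A) / (A * B)"
    using p2 by (simp add: diff_frac_eq)
  also have "r ^ m * B - r * r ^ m * A = r ^ m" using T3 by (simp add: algebra_simps)
  finally show ?thesis unfolding A_def B_def .
qed

lemma yy_bound: "r \<ge> 0 \<Longrightarrow> r \<le> 1 \<Longrightarrow> 0 \<le> yy r j \<and> yy r j \<le> 1"
proof -
  assume "r \<ge> 0" "r \<le> 1"
  have "TT r (j+2) \<ge> 1" using TT_ge1 \<open>r \<ge> 0\<close> by simp
  moreover have "r ^ j \<le> 1" using \<open>r \<ge> 0\<close> \<open>r \<le> 1\<close> by (simp add: power_le_one)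
  ultimately show ?thesis unfolding yy_def using \<open>r \<ge> 0\<close>
    by (auto simp: divide_le_eq)
qed

lemma yy_dec: assumes "r > 0" "r \<le> 1" shows "yy r (Suc m) \<le> yy r m"
proof -
  have "r ^ m / (TT r (m+2) * TT r (m+3)) \<ge> 0"
    using TT_ge1[of r "m+2"] TT_ge1[of r "m+3"] assms by simp
  thus ?thesis using yy_gap[OF assms(1), of m] by linarith
qed

lemma yy_sep:
  assumes "1/2 \<le> r" "r < 1" "j < i" "i < n"
  shows "yy r j - yy r i \<ge> (1/2)^n / (real n + 2)^2"
  using assms(3,4)
proof (induction i)
  case 0 thus ?case by simp
next
  case (Suc i)
  have r0: "r > 0" using assms by simp
  show ?case
  proof (cases "j = i")
    case True
    have rp: "0 \<le> r ^ i" using r0 by simp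
    have "(1/2)^n \<le> r ^ i"
    proof -
      have "(1/2::real)^n \<le> (1/2)^i" using Suc.prems by (intro power_decreasing) simp_all
      also have "\<dots> \<le> r ^ i" using assms by (intro power_mono) simp_all
      finally show ?thesis .
    qed
    moreover have "TT r (i+2) * TT r (i+3) \<le> (real n + 2)^2"
    proof -
      have "TT r (i+2) \<le> real n + 2" "TT r (i+3) \<le> real n + 2"
        using TT_le[of r "i+2"] TT_le[of r "i+3"] Suc.prems assms by simp_all
      moreover have "TT r (i+2) \<ge> 0" "TT r (i+3) \<ge> 0" using TT_ge1[of r "i+2"] TT_ge1[of r "i+3"] r0 by simp_all
      ultimately show ?thesis unfolding power2_eq_square by (intro mult_mono) simp_all
    qed
    moreover have "TT r (i+2) * TT r (i+3) > 0"
      using TT_ge1[of r "i+2"] TT_ge1[of r "i+3"] r0 by simp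
    ultimately have "(1/2)^n / (real n + 2)^2 \<le> r ^ i / (TT r (i+2) * TT r (i+3))"
      using rp by (intro frac_le) simp_all
    moreover have "yy r j = yy r i" using True by simp
    ultimately show ?thesis using yy_gap[OF r0, of i] by linarith
  next
    case False
    hence "j < i" using Suc.prems by linarith
    hence "yy r j - yy r i \<ge> (1/2)^n / (real n + 2)^2" using Suc.IH Suc.prems by linarith
    moreover have "yy r (Suc i) \<le> yy r i" using yy_dec r0 assms by simp
    ultimately show ?thesis by linarith
  qed
qed

lemma yy_inj: assumes "0 < r" "r < 1" shows "inj_on (\<lambda>j. complex_of_real (yy r j)) {..<n}"
proof -
  have strict: "yy r i < yy r j" if "j < i" for i j
    using that
  proof (induction i)
    case 0 thus ?case by simp
  next
    case (Suc i)
    have "r ^ i / (TT r (i+2) * TT r (i+3)) > 0"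
      using TT_ge1[of r "i+2"] TT_ge1[of r "i+3"] assms by simp
    hence "yy r (Suc i) < yy r i"
      using yy_gap[OF assms(1), of i] by linarith
    thus ?case using Suc by (cases "j = i") auto
  qed
  show ?thesis unfolding inj_on_def
    by (metis linorder_neqE_nat of_real_eq_iff order_less_irrefl strict)
qed
theorem lemma2p6:
  fixes n :: nat and f :: "nat \<Rightarrow> complex \<Rightarrow> complex"
  shows "\<exists>b :: nat \<Rightarrow> nat \<Rightarrow> complex \<Rightarrow> complex.
     (\<forall>j<n. \<forall>k<n. \<exists>M. \<forall>z. 1/2 < norm z \<and> norm z < 1 \<longrightarrow> norm (b j k z) \<le> M) \<and>
     (\<forall>k<n. \<forall>z. 0 < norm z \<and> norm z < 1 \<longrightarrow>
        f k z * of_real ((1 - norm z) ^ (n - k)) = (\<Sum>j<n. b j k z * Dfun n f j z))"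
proof -
  define Y where "Y z = (\<lambda>j. complex_of_real (yy (norm z) j))" for z :: complex
  define \<delta> where "\<delta> = (1/2::real)^n / (real n + 2)^2"
  have \<delta>0: "\<delta> > 0" unfolding \<delta>_def by simp
  define b where "b j k z = complex_of_real (1/(1 + norm z)^n) * (coeff (Lp n (Y z) j) k / Ld n (Y z) j)"
    for j k z
  have bound: "\<forall>j<n. \<forall>k<n. \<exists>M. \<forall>z. 1/2 < norm z \<and> norm z < 1 \<longrightarrow> norm (b j k z) \<le> M"
  proof (intro allI impI)
    fix j k assume j: "j < n" and k: "k < n"
    show "\<exists>M. \<forall>z. 1/2 < norm z \<and> norm z < 1 \<longrightarrow> norm (b j k z) \<le> M"
    proof (intro exI allI impI)
      fix z :: complex assume z: "1/2 < norm z \<and> norm z < 1"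
      define r where "r = norm z"
      have r: "1/2 < r" "r < 1" using z r_def by auto
      have cardS: "card ({..<n}-{j}) = n - 1" using j by simp
      have c: "norm (coeff (Lp n (Y z) j) k) \<le> 2^(n-1)"
        unfolding Lp_def using coeff_lin_prod_bound[of "{..<n}-{j}" "Y z" k] yy_bound[of r] r
        by (simp add: Y_def r_def[symmetric] cardS)
      have sep: "\<delta> \<le> norm (Y z j - Y z i)" if "i \<in> {..<n}-{j}" for i
      proof -
        have "i \<noteq> j" "i < n" using that by auto
        then consider "j < i" | "i < j" by linarith
        thus ?thesis
        proof cases
          case 1
          have "\<delta> \<le> yy r j - yy r i" unfolding \<delta>_def using yy_sep[of r j i n] r 1 \<open>i < n\<close> by simp
          thus ?thesis unfolding Y_def r_def[symmetric] norm_of_real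
            by (metis of_real_diff norm_of_real abs_ge_self order_trans)
        next
          case 2
          have "\<delta> \<le> yy r i - yy r j" unfolding \<delta>_def using yy_sep[of r i j n] r 2 j by simp
          thus ?thesis unfolding Y_def r_def[symmetric]
            by (metis of_real_diff norm_of_real abs_minus_commute abs_ge_self order_trans)
        qed
      qed
      have d: "\<delta>^(n-1) \<le> norm (Ld n (Y z) j)"
      proof -
        have "\<delta>^(n-1) = (\<Prod>i\<in>{..<n}-{j}. \<delta>)" using cardS by simp
        also have "\<dots> \<le> (\<Prod>i\<in>{..<n}-{j}. norm (Y z j - Y z i))"
          by (intro prod_mono) (use sep \<delta>0 in auto)
        also have "\<dots> = norm (Ld n (Y z) j)" unfolding Ld_def by (simp add: prod_norm)
        finally show ?thesis .
      qed
      have dpos: "0 < \<delta>^(n-1)" using \<delta>0 by simp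
      have q: "norm (coeff (Lp n (Y z) j) k / Ld n (Y z) j) \<le> 2^(n-1) / \<delta>^(n-1)"
        unfolding norm_divide by (intro frac_le) (use c d dpos in auto)
      have s1: "1 \<le> (1 + norm z)^n" by (rule one_le_power) simp
      have s: "norm (complex_of_real (1/(1 + norm z)^n)) \<le> 1"
        unfolding norm_of_real using s1 by (simp add: divide_le_eq)
      have "norm (b j k z) \<le> 1 * (2^(n-1) / \<delta>^(n-1))"
        unfolding b_def norm_mult by (intro mult_mono s q) auto
      thus "norm (b j k z) \<le> 2^(n-1) / \<delta>^(n-1)" by simp
    qed
  qed
  have ident: "\<forall>k<n. \<forall>z. 0 < norm z \<and> norm z < 1 \<longrightarrow>
        f k z * of_real ((1 - norm z) ^ (n - k)) = (\<Sum>j<n. b j k z * Dfun n f j z)"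
  proof (intro allI impI)
    fix k and z :: complex assume k: "k < n" and z: "0 < norm z \<and> norm z < 1"
    define r where "r = norm z"
    have r: "0 < r" "r < 1" using z r_def by auto
    define g where "g m = f m z / of_real ((1-r)^m)" for m
    define E where "E j = Dfun n f j z / of_real ((1-r^2)^n)" for j
    have r2: "(1 - r^2) \<noteq> 0" using r by (simp add: power2_eq_square) (smt (verit) mult_less_cancel_right2)
    have r1: "1 - r \<noteq> 0" using r by simp
    have Eeq: "E j = (\<Sum>m<n. Y z j ^ m * g m)" for j
    proof -
      define q where "q = r^j / (1 - r^(j+2))"
      have T: "1 - r^(j+2) = (1 - r) * TT r (j+2)" unfolding TT_def by (rule one_diff_power_eq)
      have Tp: "TT r (j+2) \<noteq> 0" using TT_ge1[of r "j+2"] r by simp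
      have yq: "yy r j = q * (1 - r)" unfolding q_def yy_def T using r1 Tp by simp
      have "E j = (\<Sum>m<n. of_real (r ^ (j * m)) * f m z *
          of_real ((1 - r\<^sup>2) ^ n / (1 - r ^ (j + 2)) ^ m) / of_real ((1-r^2)^n))"
        unfolding E_def Dfun_def r_def sum_divide_distrib ..
      also have "\<dots> = (\<Sum>m<n. Y z j ^ m * g m)"
      proof (intro sum.cong refl)
        fix m
        have "of_real (r ^ (j * m)) * f m z * of_real ((1 - r\<^sup>2) ^ n / (1 - r ^ (j + 2)) ^ m) / of_real ((1-r^2)^n)
           = complex_of_real (q ^ m) * f m z"
        proof -
          have gen: "\<And>a F b c. (a::complex) * F * b / c = (a * b / c) * F"
            by (simp add: divide_inverse ac_simps)
          have P: "(1 - r\<^sup>2) ^ n \<noteq> 0" using r2 by simp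
          have re: "r^(j*m) * ((1 - r\<^sup>2) ^ n / (1 - r ^ (j + 2)) ^ m) / (1 - r\<^sup>2) ^ n = q ^ m"
            using P unfolding q_def power_divide power_mult by simp
          show ?thesis unfolding gen of_real_mult[symmetric] of_real_divide[symmetric] re ..
        qed
        also have "\<dots> = Y z j ^ m * g m"
        proof -
          have Yq: "Y z j = of_real q * of_real (1-r)" unfolding Y_def r_def[symmetric] yq by simp
          have b0: "complex_of_real (1-r) ^ m \<noteq> 0" using r1 by simp
          show ?thesis unfolding Yq g_def power_mult_distrib of_real_power using b0 r1 by simp
        qed
        finally show "of_real (r ^ (j * m)) * f m z * of_real ((1 - r\<^sup>2) ^ n / (1 - r ^ (j + 2)) ^ m) / of_real ((1-r^2)^n)
           = Y z j ^ m * g m" .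
      qed
      finally show ?thesis .
    qed
    have inj: "inj_on (Y z) {..<n}" unfolding Y_def r_def[symmetric] using yy_inj r by simp
    have L: "g k = (\<Sum>j<n. (coeff (Lp n (Y z) j) k / Ld n (Y z) j) * E j)"
      unfolding Eeq by (rule lagrange[OF inj k])
    have "f k z * of_real ((1 - r) ^ (n - k)) = g k * of_real ((1 - r)^n)"
    proof -
      have "(1 - r)^n = (1-r)^k * (1-r)^(n-k)" using k by (simp flip: power_add)
      thus ?thesis unfolding g_def using r1 by (simp add: field_simps)
    qed
    also have "\<dots> = (\<Sum>j<n. (coeff (Lp n (Y z) j) k / Ld n (Y z) j) * E j * of_real ((1 - r)^n))"
      unfolding L sum_distrib_right ..
    also have "\<dots> = (\<Sum>j<n. b j k z * Dfun n f j z)"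
    proof (intro sum.cong refl)
      fix j
      have "(1 - r^2) = (1 - r) * (1 + r)" by (simp add: power2_eq_square algebra_simps)
      hence e: "(1-r)^n / (1-r^2)^n = 1 / (1+r)^n" using r1 by (simp add: power_mult_distrib)
      have "E j * of_real ((1 - r)^n) = of_real ((1-r)^n / (1-r^2)^n) * Dfun n f j z"
        unfolding E_def by simp
      also have "\<dots> = of_real (1/(1+r)^n) * Dfun n f j z" unfolding e ..
      finally show "(coeff (Lp n (Y z) j) k / Ld n (Y z) j) * E j * of_real ((1 - r)^n) = b j k z * Dfun n f j z"
        unfolding b_def r_def[symmetric] by (simp add: mult.assoc mult.left_commute)
    qed
    finally show "f k z * of_real ((1 - norm z) ^ (n - k)) = (\<Sum>j<n. b j k z * Dfun n f j z)"
      unfolding r_def .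
  qed
  show ?thesis using bound ident by blast
qed

end
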